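(* Let $p \in \mathbb{R}\setminus\{0\}$, $q \in \mathbb{R}$, and $\Delta = \frac{q^2}{4} - p$. Let $\mathcal{A}_{p,q} = \{A \in S(4,\mathbb{R}) : \operatorname{Pf}(A) = p,\ \operatorname{s}(A) = q\}$, viewed as the subset $\{(a,b,c,d,e,f) \in \mathbb{R}^6 : af - be + cd = p,\ a + f = q\}$ of $\mathbb{R}^6$. Then: (1) if $\Delta < 0$, $\mathcal{A}_{p,q}$ is homeomorphic to $(\mathbb{R}^2 \setminus \{(0,0)\}) \times \mathbb{R}^2$; (2) if $\Delta > 0$, $\mathcal{A}_{p,q}$ is homeomorphic to $\mathbb{S}^2 \times \mathbb{R}^2$.
   Context: $S(4,\mathbb{R})$ is the set of invertible skew-symmetric real $4\times 4$ matrices; such a matrix is identified with $(a,b,c,d,e,f)\in\mathbb{R}^6$ via $A = \begin{bmatrix} 0 & a & b & c \\ -a & 0 & d & e \\ -b & -d & 0 & f \\ -c & -e & -f & 0\end{bmatrix}$, and $\operatorname{Pf}(A) = af - be + cd$, $\operatorname{s}(A) = a + f$. *)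

theory Defs
  imports "HOL-Analysis.Analysis"
begin

text \<open>Invertible skew-symmetric 4x4 real matrices, identified with vectors
(a,b,c,d,e,f) in R^6 (components 1..6). Pfaffian and the invariant s.\<close>

definition Pf6 :: "real^6 \<Rightarrow> real" where
  "Pf6 x = x$1 * x$6 - x$2 * x$5 + x$3 * x$4"

definition s6 :: "real^6 \<Rightarrow> real" where
  "s6 x = x$1 + x$6"

definition A_pq :: "real \<Rightarrow> real \<Rightarrow> (real^6) set" where
  "A_pq p q = {x. Pf6 x = p \<and> s6 x = q}"

end

theory Submission imports Defs begin
lemma exhaust_6:
  fixes x :: 6
  shows "x = 1 \<or> x = 2 \<or> x = 3 \<or> x = 4 \<or> x = 5 \<or> x = 6"
proof (induct x)
  case (of_int z)
  then have "z = 0 \<or> z = 1 \<or> z = 2 \<or> z = 3 \<or> z = 4 \<or> z = 5" by fastforce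
  then show ?case by auto
qed
definition mk6 :: "real \<Rightarrow> real \<Rightarrow> real \<Rightarrow> real \<Rightarrow> real \<Rightarrow> real \<Rightarrow> real^6" where
 "mk6 a b c d e f = (\<chi> i. if i = 1 then a else if i = 2 then b else if i = 3 then c else if i = 4 then d else if i = 5 then e else f)"
lemma mk6_nth[simp]: "mk6 a b c d e f $ 1 = a" "mk6 a b c d e f $ 2 = b" "mk6 a b c d e f $ 3 = c"
  "mk6 a b c d e f $ 4 = d" "mk6 a b c d e f $ 5 = e" "mk6 a b c d e f $ 6 = f"
  by (simp_all add: mk6_def)
lemma mk6_eta: "mk6 (x$1) (x$2) (x$3) (x$4) (x$5) (x$6) = x"
  unfolding vec_eq_iff
proof
  fix i :: 6
  show "mk6 (x$1) (x$2) (x$3) (x$4) (x$5) (x$6) $ i = x $ i"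
    using exhaust_6[of i] by (elim disjE) simp_all
qed
lemma cont_mk6[continuous_intros]:
  assumes "continuous_on S a" "continuous_on S b" "continuous_on S c" "continuous_on S d" "continuous_on S e" "continuous_on S f"
  shows "continuous_on S (\<lambda>x. mk6 (a x) (b x) (c x) (d x) (e x) (f x))"
  unfolding mk6_def
  apply (rule continuous_on_vec_lambda)
  subgoal for i using exhaust_6[of i] by (elim disjE) (simp_all add: assms)
  done
definition mk3 :: "real \<Rightarrow> real \<Rightarrow> real \<Rightarrow> real^3" where
 "mk3 a b c = (\<chi> i. if i = 1 then a else if i = 2 then b else c)"
lemma mk3_nth[simp]: "mk3 a b c $ 1 = a" "mk3 a b c $ 2 = b" "mk3 a b c $ 3 = c"
  by (simp_all add: mk3_def)
lemma cont_mk3[continuous_intros]: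
  assumes "continuous_on S a" "continuous_on S b" "continuous_on S c"
  shows "continuous_on S (\<lambda>x. mk3 (a x) (b x) (c x))"
  unfolding mk3_def
  apply (rule continuous_on_vec_lambda)
  subgoal for i using exhaust_3[of i] by (elim disjE) (simp_all add: assms)
  done
definition mk2 :: "real \<Rightarrow> real \<Rightarrow> real^2" where
 "mk2 a b = (\<chi> i. if i = 1 then a else b)"
lemma mk2_nth[simp]: "mk2 a b $ 1 = a" "mk2 a b $ 2 = b"
  by (simp_all add: mk2_def)
lemma cont_mk2[continuous_intros]:
  assumes "continuous_on S a" "continuous_on S b"
  shows "continuous_on S (\<lambda>x. mk2 (a x) (b x))"
  unfolding mk2_def
  apply (rule continuous_on_vec_lambda)
  subgoal for i using exhaust_2[of i] by (elim disjE) (simp_all add: assms)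
  done
lemma mk2_eq: "(x::real^2) = y \<longleftrightarrow> x$1 = y$1 \<and> x$2 = y$2"
  by (simp add: vec_eq_iff forall_2)
lemma mk3_eq: "(x::real^3) = y \<longleftrightarrow> x$1 = y$1 \<and> x$2 = y$2 \<and> x$3 = y$3"
  by (simp add: vec_eq_iff forall_3)
lemma norm2: "norm (x::real^2) = sqrt (x$1^2 + x$2^2)"
  by (simp add: norm_vec_def L2_set_def sum_2)
lemma norm3: "norm (x::real^3) = sqrt (x$1^2 + x$2^2 + x$3^2)"
  by (simp add: norm_vec_def L2_set_def sum_3)

definition W :: "real \<Rightarrow> ((real \<times> real \<times> real) \<times> (real \<times> real)) set" where
  "W d = {y. (fst (fst y))^2 + (fst (snd (fst y)))^2 + (snd (snd (fst y)))^2 - (fst (snd y))^2 - (snd (snd y))^2 = d}"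

lemma step1: "A_pq p q homeomorphic W (q^2/4 - p)"
  unfolding homeomorphic_def
proof (intro exI)
  let ?L = "\<lambda>x::real^6. ((x$1 - q/2, (x$2+x$5)/2, (x$3-x$4)/2), ((x$2-x$5)/2, (x$3+x$4)/2))"
  let ?M = "\<lambda>y::(real \<times> real \<times> real) \<times> (real \<times> real). mk6 (q/2 + fst (fst y)) (fst (snd (fst y)) + fst (snd y))
     (snd (snd (fst y)) + snd (snd y)) (snd (snd y) - snd (snd (fst y))) (fst (snd (fst y)) - fst (snd y)) (q/2 - fst (fst y))"
  show "homeomorphism (A_pq p q) (W (q^2/4 - p)) ?L ?M"
  proof (rule homeomorphismI)
    show "continuous_on (A_pq p q) ?L" by (intro continuous_intros) auto
    show "continuous_on (W (q^2/4 - p)) ?M" by (intro continuous_intros)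
    show "?L ` A_pq p q \<subseteq> W (q^2/4 - p)"
    proof
      fix y assume "y \<in> ?L ` A_pq p q"
      then obtain x where x: "x \<in> A_pq p q" "y = ?L x" by blast
      then have h: "x$1 * x$6 - x$2 * x$5 + x$3 * x$4 = p" "x$6 = q - x$1"
        by (auto simp: A_pq_def Pf6_def s6_def)
      show "y \<in> W (q^2/4 - p)" using h unfolding x(2) W_def
        by (simp add: power2_eq_square field_simps)
    qed
    show "?M ` W (q^2/4 - p) \<subseteq> A_pq p q"
    proof
      fix x assume "x \<in> ?M ` W (q^2/4 - p)"
      then obtain y where y: "y \<in> W (q^2/4 - p)" "x = ?M y" by blast
      obtain t a b c d where "y = ((t,a,b),(c,d))" by (metis prod.collapse)
      then show "x \<in> A_pq p q" using y unfolding A_pq_def Pf6_def s6_def W_def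
        by (simp add: power2_eq_square field_simps)
    qed
    show "?M (?L x) = x" if "x \<in> A_pq p q" for x
    proof -
      have "x$6 = q - x$1" using that by (auto simp: A_pq_def s6_def)
      then have "q/2 - (x$1 - q/2) = x$6" by simp
      moreover have "q/2 + (x$1 - q/2) = x$1" by simp
      moreover have "(x$2 + x$5)/2 + (x$2 - x$5)/2 = x$2" "(x$2 + x$5)/2 - (x$2 - x$5)/2 = x$5"
         "(x$3 - x$4)/2 + (x$3 + x$4)/2 = x$3" "(x$3 + x$4)/2 - (x$3 - x$4)/2 = x$4" by (simp_all add: field_simps)
      ultimately show ?thesis by (simp add: mk6_eta)
    qed
    show "?L (?M y) = y" for y
      by (cases y) (auto simp: field_simps)
  qed
qed
lemma step2a:
  assumes d: "d > 0"
  shows "W d homeomorphic (sphere (0::real^3) 1 \<times> (UNIV :: (real^2) set))"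
  unfolding homeomorphic_def
proof (intro exI)
  let ?n = "\<lambda>y::(real \<times> real \<times> real) \<times> (real \<times> real). sqrt ((fst (fst y))^2 + (fst (snd (fst y)))^2 + (snd (snd (fst y)))^2)"
  let ?F = "\<lambda>y. (mk3 (fst (fst y) / ?n y) (fst (snd (fst y)) / ?n y) (snd (snd (fst y)) / ?n y), mk2 (fst (snd y)) (snd (snd y)))"
  let ?r = "\<lambda>z::(real^3) \<times> (real^2). sqrt (d + (snd z $ 1)^2 + (snd z $ 2)^2)"
  let ?G = "\<lambda>z. ((?r z * fst z $ 1, ?r z * fst z $ 2, ?r z * fst z $ 3), (snd z $ 1, snd z $ 2))"
  have npos: "?n y > 0" if "y \<in> W d" for y
  proof -
    have "(fst (fst y))^2 + (fst (snd (fst y)))^2 + (snd (snd (fst y)))^2 = d + (fst (snd y))^2 + (snd (snd y))^2"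
      using that by (simp add: W_def)
    also have "\<dots> > 0" using d by (simp add: add_pos_nonneg)
    finally show ?thesis by simp
  qed
  have rpos: "?r z > 0" for z using d by (simp add: add_pos_nonneg)
  have sph: "(fst z $ 1)^2 + (fst z $ 2)^2 + (fst z $ 3)^2 = 1" if "z \<in> sphere (0::real^3) 1 \<times> (UNIV :: (real^2) set)" for z
  proof -
    have "norm (fst z) = 1" using that by auto
    then show ?thesis by (simp add: norm3)
  qed
  show "homeomorphism (W d) (sphere (0::real^3) 1 \<times> (UNIV :: (real^2) set)) ?F ?G"
  proof (rule homeomorphismI)
    show "continuous_on (W d) ?F"
      by (intro continuous_intros) (use npos in force)+
    show "continuous_on (sphere (0::real^3) 1 \<times> (UNIV :: (real^2) set)) ?G"
      by (intro continuous_intros)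
    show "?F ` W d \<subseteq> sphere (0::real^3) 1 \<times> (UNIV :: (real^2) set)"
    proof
      fix z assume "z \<in> ?F ` W d"
      then obtain y where y: "y \<in> W d" "z = ?F y" by blast
      obtain t a b c e where ye: "y = ((t,a,b),(c,e))" by (metis prod.collapse)
      have n: "sqrt (t^2+a^2+b^2) > 0" using npos[OF y(1)] ye by simp
      define s where "s = sqrt (t^2+a^2+b^2)"
      have s0: "s > 0" using n s_def by simp
      have "(t / s)^2 + (a / s)^2 + (b / s)^2 = (t^2+a^2+b^2) / s^2" by (simp add: power_divide add_divide_distrib)
      also have "\<dots> = 1" using s0 s_def by simp
      finally have e1: "(t / s)^2 + (a / s)^2 + (b / s)^2 = 1" .
      have "fst z = mk3 (t/s) (a/s) (b/s)" using y ye s_def by simp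
      then have "norm (fst z) = 1" using e1 by (simp add: norm3)
      then show "z \<in> sphere (0::real^3) 1 \<times> (UNIV :: (real^2) set)"
        by (cases z) simp
    qed
    show "?G ` (sphere (0::real^3) 1 \<times> (UNIV :: (real^2) set)) \<subseteq> W d"
    proof
      fix y assume "y \<in> ?G ` (sphere (0::real^3) 1 \<times> (UNIV :: (real^2) set))"
      then obtain z where z: "z \<in> sphere (0::real^3) 1 \<times> (UNIV :: (real^2) set)" "y = ?G z" by blast
      have s: "(fst z $ 1)^2 + (fst z $ 2)^2 + (fst z $ 3)^2 = 1" using sph[OF z(1)] .
      have r2: "(?r z)^2 = d + (snd z $ 1)^2 + (snd z $ 2)^2" using d by (simp add: add_pos_nonneg)
      have "(?r z * fst z $ 1)^2 + (?r z * fst z $ 2)^2 + (?r z * fst z $ 3)^2 = (?r z)^2 * ((fst z $ 1)^2 + (fst z $ 2)^2 + (fst z $ 3)^2)"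
        by (simp add: power_mult_distrib algebra_simps)
      also have "\<dots> = d + (snd z $ 1)^2 + (snd z $ 2)^2" using s r2 by simp
      finally show "y \<in> W d" using z(2) by (simp add: W_def)
    qed
    show "?G (?F y) = y" if "y \<in> W d" for y
    proof -
      obtain t a b c e where ye: "y = ((t,a,b),(c,e))" by (metis prod.collapse)
      have n: "sqrt (t^2+a^2+b^2) > 0" using npos[OF that] ye by simp
      have "t^2+a^2+b^2 = d + c^2 + e^2" using that ye by (simp add: W_def)
      then have "sqrt (d + c^2 + e^2) = sqrt (t^2+a^2+b^2)" by simp
      then show ?thesis using ye n by simp
    qed
    show "?F (?G z) = z" if "z \<in> sphere (0::real^3) 1 \<times> (UNIV :: (real^2) set)" for z
    proof -
      have s: "(fst z $ 1)^2 + (fst z $ 2)^2 + (fst z $ 3)^2 = 1" using sph[OF that] .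
      have r2: "(?r z)^2 = d + (snd z $ 1)^2 + (snd z $ 2)^2" using d by (simp add: add_pos_nonneg)
      have "(?r z * fst z $ 1)^2 + (?r z * fst z $ 2)^2 + (?r z * fst z $ 3)^2 = (?r z)^2 * ((fst z $ 1)^2 + (fst z $ 2)^2 + (fst z $ 3)^2)"
        by (simp add: power_mult_distrib algebra_simps)
      also have "\<dots> = (?r z)^2" using s by simp
      finally have "sqrt ((?r z * fst z $ 1)^2 + (?r z * fst z $ 2)^2 + (?r z * fst z $ 3)^2) = ?r z"
        using rpos[of z] by simp
      then show ?thesis using rpos[of z]
        by (cases z) (simp add: mk3_eq mk2_eq)
    qed
  qed
qed
lemma sq_scale: "(R/P*x)^2 + (R/P*y)^2 = R^2/P^2*(x^2+y^2::real)"
  by (simp add: power_mult_distrib power_divide distrib_left)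

lemma step2b:
  assumes d: "d < 0"
  shows "W d homeomorphic ((UNIV - {0::real^2}) \<times> (UNIV :: (real^2) set))"
  unfolding homeomorphic_def
proof (intro exI)
  let ?T = "(UNIV - {0::real^2}) \<times> (UNIV :: (real^2) set)"
  let ?m = "\<lambda>y::(real \<times> real \<times> real) \<times> (real \<times> real). sqrt ((fst (snd y))^2 + (snd (snd y))^2)"
  let ?F = "\<lambda>y. (mk2 (exp (fst (fst y)) * fst (snd y) / ?m y) (exp (fst (fst y)) * snd (snd y) / ?m y), mk2 (fst (snd (fst y))) (snd (snd (fst y))))"
  let ?rho = "\<lambda>z::(real^2) \<times> (real^2). norm (fst z)"
  let ?r = "\<lambda>z::(real^2) \<times> (real^2). sqrt ((ln (?rho z))^2 + (snd z $ 1)^2 + (snd z $ 2)^2 - d)"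
  let ?G = "\<lambda>z. ((ln (?rho z), snd z $ 1, snd z $ 2), (?r z / ?rho z * (fst z $ 1), ?r z / ?rho z * (fst z $ 2)))"
  have mpos: "?m y > 0" if "y \<in> W d" for y
  proof -
    have "(fst (snd y))^2 + (snd (snd y))^2 = (fst (fst y))^2 + (fst (snd (fst y)))^2 + (snd (snd (fst y)))^2 - d"
      using that by (simp add: W_def)
    also have "\<dots> > 0" using d zero_le_power2[of "fst (fst y)"] zero_le_power2[of "fst (snd (fst y))"] zero_le_power2[of "snd (snd (fst y))"] by linarith
    finally show ?thesis by simp
  qed
  have rr: "(ln (?rho z))^2 + (snd z $ 1)^2 + (snd z $ 2)^2 - d > 0" for z
    using d zero_le_power2[of "ln (?rho z)"] zero_le_power2[of "snd z $ 1"] zero_le_power2[of "snd z $ 2"] by linarith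
  have r2: "(?r z)^2 = (ln (?rho z))^2 + (snd z $ 1)^2 + (snd z $ 2)^2 - d" for z
    using rr[of z] by simp
  have rpos: "?r z > 0" for z using rr[of z] by simp
  have rho2: "(?rho z)^2 = (fst z $ 1)^2 + (fst z $ 2)^2" for z by (simp add: norm2)
  have rhopos: "?rho z > 0" if "z \<in> ?T" for z using that by auto
  have key: "(?r z / ?rho z * (fst z $ 1))^2 + (?r z / ?rho z * (fst z $ 2))^2 = (?r z)^2" if "z \<in> ?T" for z
  proof -
    have "(?r z / ?rho z * (fst z $ 1))^2 + (?r z / ?rho z * (fst z $ 2))^2 = (?r z)^2 / (?rho z)^2 * ((fst z $ 1)^2 + (fst z $ 2)^2)"
      by (rule sq_scale)
    also have "\<dots> = (?r z)^2 / (?rho z)^2 * (?rho z)^2" by (simp only: rho2)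
    also have "\<dots> = (?r z)^2" using rhopos[OF that] by simp
    finally show ?thesis .
  qed
  show "homeomorphism (W d) ?T ?F ?G"
  proof (rule homeomorphismI)
    show "continuous_on (W d) ?F"
      by (intro continuous_intros) (use mpos in force)+
    show "continuous_on ?T ?G"
      by (intro continuous_intros) (use rhopos in force)+
    show "?F ` W d \<subseteq> ?T"
    proof
      fix z assume "z \<in> ?F ` W d"
      then obtain y where y: "y \<in> W d" "z = ?F y" by blast
      obtain t a b c e where ye: "y = ((t,a,b),(c,e))" by (metis prod.collapse)
      have m: "sqrt (c^2+e^2) > 0" using mpos[OF y(1)] ye by simp
      then have "c \<noteq> 0 \<or> e \<noteq> 0" by auto
      then have "fst z \<noteq> 0" using y ye m by (auto simp: mk2_eq)
      then show "z \<in> ?T" by (cases z) simp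
    qed
    show "?G ` ?T \<subseteq> W d"
    proof
      fix y assume "y \<in> ?G ` ?T"
      then obtain z where z: "z \<in> ?T" "y = ?G z" by blast
      show "y \<in> W d" using z(2) key[OF z(1)] r2[of z] by (simp add: W_def)
    qed
    show "?G (?F y) = y" if "y \<in> W d" for y
    proof -
      obtain t a b c e where ye: "y = ((t,a,b),(c,e))" by (metis prod.collapse)
      define m where "m = sqrt (c^2+e^2)"
      have m: "m > 0" using mpos[OF that] ye m_def by simp
      have m2: "m^2 = c^2 + e^2" using m_def by simp
      have "(exp t * c / m)^2 + (exp t * e / m)^2 = (exp t)^2 * ((c^2 + e^2) / m^2)"
        by (simp add: power_mult_distrib power_divide algebra_simps add_divide_distrib)
      also have "\<dots> = (exp t)^2 * (m^2 / m^2)" by (simp only: m2)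
      also have "\<dots> = (exp t)^2" using m by simp
      finally have "norm (mk2 (exp t * c / m) (exp t * e / m)) = exp t" by (simp add: norm2)
      moreover have "sqrt (t^2 + a^2 + b^2 - d) = m"
      proof -
        have "c^2 + e^2 = t^2 + a^2 + b^2 - d" using that ye by (simp add: W_def)
        then show ?thesis using m_def by simp
      qed
      ultimately show ?thesis using ye m m_def[symmetric] by simp
    qed
    show "?F (?G z) = z" if "z \<in> ?T" for z
    proof -
      have "sqrt ((?r z / ?rho z * (fst z $ 1))^2 + (?r z / ?rho z * (fst z $ 2))^2) = ?r z"
        using key[OF that] rpos[of z] by simp
      moreover have "exp (ln (?rho z)) = ?rho z" using rhopos[OF that] by simp
      ultimately show ?thesis using rpos[of z] rhopos[OF that]
        by (cases z) (simp add: mk2_eq)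
    qed
  qed
qed

theorem theorem2p3:
  fixes p q :: real
  assumes "p \<noteq> 0"
  shows "(q\<^sup>2 / 4 - p < 0 \<longrightarrow>
            A_pq p q homeomorphic ((UNIV - {0::real^2}) \<times> (UNIV :: (real^2) set)))
       \<and> (q\<^sup>2 / 4 - p > 0 \<longrightarrow>
            A_pq p q homeomorphic (sphere (0::real^3) 1 \<times> (UNIV :: (real^2) set)))"
proof (intro conjI impI)
  assume "q\<^sup>2 / 4 - p < 0"
  from homeomorphic_trans[OF step1[of p q] step2b[OF this]]
  show "A_pq p q homeomorphic ((UNIV - {0::real^2}) \<times> (UNIV :: (real^2) set))" .
next
  assume "q\<^sup>2 / 4 - p > 0"
  from homeomorphic_trans[OF step1[of p q] step2a[OF this]]
  show "A_pq p q homeomorphic (sphere (0::real^3) 1 \<times> (UNIV :: (real^2) set))" .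
qed
end
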